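(* Let $T>0$ and let $b^k,b\in L^\infty\cap L^1(\mathbb{R}\times(0,T))$ for all $k\in\mathbb{N}$. Assume (i) there is a function $0\le L\in L^{1/2}([0,T])$ such that $|b^k(\cdot,t)|_{\mathrm{Lip}^+}\le L(t)$ for a.e. $t\in(0,T)$ and all $k\in\mathbb{N}$; (ii) $\lim_{k\to\infty}\|b^k-b\|_{L^\infty((0,T);L^1(\mathbb{R}))}=0$. Then for every $R>0$, $\lim_{k\to\infty}\|d_R(b^k;b)\|_{L^1(0,T)}=0$.
   Context: The one-sided Lipschitz constant is $|c|_{\mathrm{Lip}^+}\coloneqq\sup_{x\ne y}\frac{c(x)-c(y)}{x-y}$. For bounded measurable $b:\mathbb{R}\times(0,T)\to\mathbb{R}$, $K_R[b](x,t)\coloneqq\bigcap_{|N|=0}\overline{\mathrm{conv}}\bigl(b(B_R(x)\setminus N,t)\bigr)$, the closed convex hull of the essential range of $b(\cdot,t)$ over $(x-R,x+R)$, and $d_R(b^k;b)(t)\coloneqq\operatorname{ess\,sup}_{x\in\mathbb{R}}\operatorname{dist}\bigl(b^k(x,t),K_R[b](x,t)\bigr)$. *)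

theory Defs
  imports "HOL-Analysis.Analysis" "HOL-Probability.Essential_Supremum"
begin

definition lip_plus :: "(real \<Rightarrow> real) \<Rightarrow> ereal" where
  "lip_plus c = (SUP p \<in> {(x, y). x \<noteq> y}. ereal ((c (fst p) - c (snd p)) / (fst p - snd p)))"

definition K_R :: "(real \<Rightarrow> real \<Rightarrow> real) \<Rightarrow> real \<Rightarrow> real \<Rightarrow> real \<Rightarrow> real set" where
  "K_R b R x t = (\<Inter> N \<in> null_sets lborel. closure (convex hull ((\<lambda>y. b y t) ` (ball x R - N))))"

definition d_R :: "(real \<Rightarrow> real \<Rightarrow> real) \<Rightarrow> (real \<Rightarrow> real \<Rightarrow> real) \<Rightarrow> real \<Rightarrow> real \<Rightarrow> ereal" where
  "d_R bk b R t = esssup lborel (\<lambda>x. ereal (infdist (bk x t) (K_R b R x t)))"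

end

theory Submission
  imports Defs
begin

definition Pset :: "(real \<Rightarrow> real) \<Rightarrow> real \<Rightarrow> real \<Rightarrow> real \<Rightarrow> real set" where
  "Pset f R x w = {y \<in> ball x R. f y \<le> w}"
definition Qset :: "(real \<Rightarrow> real) \<Rightarrow> real \<Rightarrow> real \<Rightarrow> real \<Rightarrow> real set" where
  "Qset f R x w = {y \<in> ball x R. w \<le> f y}"
definition good :: "(real \<Rightarrow> real) \<Rightarrow> real \<Rightarrow> real \<Rightarrow> real \<Rightarrow> bool" where
  "good f R x w \<longleftrightarrow> Pset f R x w \<notin> null_sets lborel \<and> Qset f R x w \<notin> null_sets lborel"

lemma PQ_sets:
  assumes [measurable]: "(f::real\<Rightarrow>real) \<in> borel_measurable borel"
  shows "Pset f R x w \<in> sets lborel" "Qset f R x w \<in> sets lborel"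
    "{y \<in> ball x R. f y < w} \<in> sets lborel" "{y \<in> ball x R. w < f y} \<in> sets lborel"
proof -
  have [measurable]: "ball x R \<in> sets borel" by simp
  have "{y \<in> space borel. y \<in> ball x R \<and> f y \<le> w} \<in> sets borel" "{y \<in> space borel. y \<in> ball x R \<and> w \<le> f y} \<in> sets borel"
    "{y \<in> space borel. y \<in> ball x R \<and> f y < w} \<in> sets borel" "{y \<in> space borel. y \<in> ball x R \<and> w < f y} \<in> sets borel"
    by measurable
  then show "Pset f R x w \<in> sets lborel" "Qset f R x w \<in> sets lborel"
    "{y \<in> ball x R. f y < w} \<in> sets lborel" "{y \<in> ball x R. w < f y} \<in> sets lborel"
    by (simp_all add: Pset_def Qset_def)
qed

lemma P_mono:
  assumes f: "f \<in> borel_measurable borel" and "w \<le> w'" and "Pset f R x w \<notin> null_sets lborel"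
  shows "Pset f R x w' \<notin> null_sets lborel"
proof
  assume "Pset f R x w' \<in> null_sets lborel"
  moreover have "Pset f R x w \<subseteq> Pset f R x w'" using assms(2) by (auto simp: Pset_def)
  ultimately show False using null_sets_subset[OF _ PQ_sets(1)[OF f]] assms(3) by blast
qed

lemma Q_anti:
  assumes f: "f \<in> borel_measurable borel" and "w' \<le> w" and "Qset f R x w \<notin> null_sets lborel"
  shows "Qset f R x w' \<notin> null_sets lborel"
proof
  assume "Qset f R x w' \<in> null_sets lborel"
  moreover have "Qset f R x w \<subseteq> Qset f R x w'" using assms(2) by (auto simp: Qset_def)
  ultimately show False using null_sets_subset[OF _ PQ_sets(2)[OF f]] assms(3) by blast
qed

lemma select:
  assumes f: "f \<in> borel_measurable borel" and w12: "w1 \<le> w2"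
    and Q1: "Qset f R x w1 \<notin> null_sets lborel" and P2: "Pset f R x w2 \<notin> null_sets lborel"
  shows "\<exists>w \<in> {w1..w2}. good f R x w"
proof -
  have ballnn: "ball x R \<notin> null_sets lborel"
  proof
    assume "ball x R \<in> null_sets lborel"
    then have "Qset f R x w1 \<in> null_sets lborel"
      by (rule null_sets_subset[OF _ PQ_sets(2)[OF f]]) (auto simp: Qset_def)
    then show False using Q1 by blast
  qed
  define S where "S = {w\<in>{w1..w2}. Pset f R x w \<notin> null_sets lborel}"
  have w2S: "w2 \<in> S" using w12 P2 by (auto simp: S_def)
  have bdd: "bdd_below S" unfolding S_def by (rule bdd_belowI[of _ w1]) auto
  define ws where "ws = Inf S"
  have ws1: "w1 \<le> ws" unfolding ws_def using w2S by (intro cInf_greatest) (auto simp: S_def)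
  have ws2: "ws \<le> w2" unfolding ws_def using w2S bdd by (intro cInf_lower)
  show ?thesis
  proof (cases "Pset f R x ws \<in> null_sets lborel")
    case False
    show ?thesis
    proof (cases "Qset f R x ws \<in> null_sets lborel")
      case False2: False
      then show ?thesis using False ws1 ws2 by (auto simp: good_def)
    next
      case True
      have "ws \<noteq> w1" using True Q1 by auto
      then have ws1': "w1 < ws" using ws1 by simp
      have below: "Pset f R x w \<in> null_sets lborel" if "w1 \<le> w" "w < ws" for w
      proof (rule ccontr)
        assume "Pset f R x w \<notin> null_sets lborel"
        then have "w \<in> S" using that ws2 by (auto simp: S_def)
        then have "ws \<le> w" unfolding ws_def using bdd by (rule cInf_lower)
        then show False using that by simp
      qed
      define N where "N n = Pset f R x (max w1 (ws - inverse (real (Suc n))))" for n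
      have "(\<Union>n. N n) \<in> null_sets lborel"
        unfolding N_def by (intro null_sets_UN below) (auto simp: ws1')
      then have "(\<Union>n. N n) \<union> Qset f R x ws \<in> null_sets lborel"
        using True by (rule null_sets.Un)
      moreover have "ball x R \<subseteq> (\<Union>n. N n) \<union> Qset f R x ws"
      proof
        fix y assume y: "y \<in> ball x R"
        show "y \<in> (\<Union>n. N n) \<union> Qset f R x ws"
        proof (cases "ws \<le> f y")
          case True then show ?thesis using y by (auto simp: Qset_def)
        next
          case False
          then obtain n where "inverse (real (Suc n)) < ws - f y"
            using reals_Archimedean[of "ws - f y"] by auto
          then have "y \<in> N n" using y by (auto simp: N_def Pset_def)
          then show ?thesis by blast
        qed
      qed
      ultimately have "ball x R \<in> null_sets lborel"
        using null_sets_subset[of "(\<Union>n. N n) \<union> Qset f R x ws" lborel "ball x R"] by simp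
      then show ?thesis using ballnn by blast
    qed
  next
    case True
    have "ws \<noteq> w2" using True P2 by auto
    then have ws2': "ws < w2" using ws2 by simp
    have above: "Pset f R x w \<notin> null_sets lborel" if wsw: "ws < w" for w
    proof -
      obtain s where s: "s \<in> S" "s < w"
        using cInf_less_iff[of S w] w2S bdd wsw unfolding ws_def by auto
      then show ?thesis using P_mono[OF f, of s w] by (auto simp: S_def)
    qed
    have "\<exists>w. ws < w \<and> w \<le> w2 \<and> Qset f R x w \<notin> null_sets lborel"
    proof (rule ccontr)
      assume H: "\<not> ?thesis"
      define N where "N n = Qset f R x (min w2 (ws + inverse (real (Suc n))))" for n
      have "(\<Union>n. N n) \<in> null_sets lborel"
        unfolding N_def using H ws2' by (intro null_sets_UN) (auto simp: min_def)
      then have "(\<Union>n. N n) \<union> Pset f R x ws \<in> null_sets lborel"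
        using True by (rule null_sets.Un)
      moreover have "ball x R \<subseteq> (\<Union>n. N n) \<union> Pset f R x ws"
      proof
        fix y assume y: "y \<in> ball x R"
        show "y \<in> (\<Union>n. N n) \<union> Pset f R x ws"
        proof (cases "f y \<le> ws")
          case True then show ?thesis using y by (auto simp: Pset_def)
        next
          case False
          then obtain n where "inverse (real (Suc n)) < f y - ws"
            using reals_Archimedean[of "f y - ws"] by auto
          then have "y \<in> N n" using y by (auto simp: N_def Qset_def)
          then show ?thesis by blast
        qed
      qed
      ultimately have "ball x R \<in> null_sets lborel"
        using null_sets_subset[of "(\<Union>n. N n) \<union> Pset f R x ws" lborel "ball x R"] by simp
      then show False using ballnn by blast
    qed
    then obtain w where "ws < w" "w \<le> w2" "Qset f R x w \<notin> null_sets lborel" by blast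
    then show ?thesis using above[of w] ws1 by (auto simp: good_def)
  qed
qed


lemma good_in_K:
  assumes f: "(\<lambda>y. b y t) \<in> borel_measurable borel" and g: "good (\<lambda>y. b y t) R x w"
  shows "w \<in> K_R b R x t"
  unfolding K_R_def
proof (intro INT_I)
  fix N :: "real set" assume N: "N \<in> null_sets lborel"
  have "\<not> Pset (\<lambda>y. b y t) R x w \<subseteq> N"
    using g null_sets_subset[OF N PQ_sets(1)[OF f]] unfolding good_def by blast
  then obtain y1 where y1: "y1 \<in> ball x R - N" "b y1 t \<le> w" unfolding Pset_def by auto
  have "\<not> Qset (\<lambda>y. b y t) R x w \<subseteq> N"
    using g null_sets_subset[OF N PQ_sets(2)[OF f]] unfolding good_def by blast
  then obtain y2 where y2: "y2 \<in> ball x R - N" "w \<le> b y2 t" unfolding Qset_def by auto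
  have a1: "b y1 t \<in> convex hull ((\<lambda>y. b y t) ` (ball x R - N))"
    by (rule hull_inc) (use y1 in auto)
  have a2: "b y2 t \<in> convex hull ((\<lambda>y. b y t) ` (ball x R - N))"
    by (rule hull_inc) (use y2 in auto)
  have "closed_segment (b y1 t) (b y2 t) \<subseteq> convex hull ((\<lambda>y. b y t) ` (ball x R - N))"
    by (rule closed_segment_subset[OF a1 a2 convex_convex_hull])
  moreover have "w \<in> closed_segment (b y1 t) (b y2 t)"
    using y1 y2 by (simp add: closed_segment_eq_real_ivl)
  ultimately show "w \<in> closure (convex hull ((\<lambda>y. b y t) ` (ball x R - N)))"
    using closure_subset by blast
qed

lemma K_Q:
  assumes w: "w \<in> K_R b R x t" and r: "r > 0"
  shows "Qset (\<lambda>y. b y t) R x (w - r) \<notin> null_sets lborel"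
proof
  assume N: "Qset (\<lambda>y. b y t) R x (w - r) \<in> null_sets lborel"
  have "(\<lambda>y. b y t) ` (ball x R - Qset (\<lambda>y. b y t) R x (w - r)) \<subseteq> {..w - r}"
    unfolding Qset_def by auto
  then have "convex hull ((\<lambda>y. b y t) ` (ball x R - Qset (\<lambda>y. b y t) R x (w - r))) \<subseteq> {..w - r}"
    by (intro hull_minimal) auto
  then have "closure (convex hull ((\<lambda>y. b y t) ` (ball x R - Qset (\<lambda>y. b y t) R x (w - r)))) \<subseteq> {..w - r}"
    by (intro closure_minimal) auto
  moreover have "w \<in> closure (convex hull ((\<lambda>y. b y t) ` (ball x R - Qset (\<lambda>y. b y t) R x (w - r))))"
    using w N unfolding K_R_def by blast
  ultimately show False using r by auto
qed

lemma K_P: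
  assumes w: "w \<in> K_R b R x t" and r: "r > 0"
  shows "Pset (\<lambda>y. b y t) R x (w + r) \<notin> null_sets lborel"
proof
  assume N: "Pset (\<lambda>y. b y t) R x (w + r) \<in> null_sets lborel"
  have "(\<lambda>y. b y t) ` (ball x R - Pset (\<lambda>y. b y t) R x (w + r)) \<subseteq> {w + r..}"
    unfolding Pset_def by auto
  then have "convex hull ((\<lambda>y. b y t) ` (ball x R - Pset (\<lambda>y. b y t) R x (w + r))) \<subseteq> {w + r..}"
    by (intro hull_minimal) auto
  then have "closure (convex hull ((\<lambda>y. b y t) ` (ball x R - Pset (\<lambda>y. b y t) R x (w + r)))) \<subseteq> {w + r..}"
    by (intro closure_minimal) auto
  moreover have "w \<in> closure (convex hull ((\<lambda>y. b y t) ` (ball x R - Pset (\<lambda>y. b y t) R x (w + r))))"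
    using w N unfolding K_R_def by blast
  ultimately show False using r by auto
qed

lemma K_dense:
  assumes f: "(\<lambda>y. b y t) \<in> borel_measurable borel" and w: "w \<in> K_R b R x t" and r: "r > 0"
  shows "\<exists>w'. good (\<lambda>y. b y t) R x w' \<and> \<bar>w - w'\<bar> \<le> r"
proof -
  obtain w' where "w' \<in> {w - r..w + r}" "good (\<lambda>y. b y t) R x w'"
    using select[OF f _ K_Q[OF w r] K_P[OF w r]] r by auto
  then show ?thesis by (intro exI[of _ w']) auto
qed

lemma ball_nonnull: "R > 0 \<Longrightarrow> ball (x::real) R \<notin> null_sets lborel"
  by (auto simp: ball_eq_greaterThanLessThan null_sets_def)

lemma good_exists:
  assumes f: "f \<in> borel_measurable borel" and R: "R > 0"
  shows "\<exists>w. good f R x w"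
proof -
  have "\<exists>n. Qset f R x (- real n) \<notin> null_sets lborel"
  proof (rule ccontr)
    assume H: "\<not> ?thesis"
    have "(\<Union>n. Qset f R x (- real n)) \<in> null_sets lborel" using H by auto
    moreover have "ball x R \<subseteq> (\<Union>n. Qset f R x (- real n))"
    proof
      fix y assume y: "y \<in> ball x R"
      obtain n where "- f y < real n" using reals_Archimedean2 by blast
      then show "y \<in> (\<Union>n. Qset f R x (- real n))" using y by (auto simp: Qset_def intro!: exI[of _ n])
    qed
    ultimately have "ball x R \<in> null_sets lborel"
      using null_sets_subset[of "(\<Union>n. Qset f R x (- real n))" lborel "ball x R"] by simp
    then show False using ball_nonnull[OF R] by blast
  qed
  then obtain n1 where n1: "Qset f R x (- real n1) \<notin> null_sets lborel" by blast
  have "\<exists>n. Pset f R x (real n) \<notin> null_sets lborel"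
  proof (rule ccontr)
    assume H: "\<not> ?thesis"
    have "(\<Union>n. Pset f R x (real n)) \<in> null_sets lborel" using H by auto
    moreover have "ball x R \<subseteq> (\<Union>n. Pset f R x (real n))"
    proof
      fix y assume y: "y \<in> ball x R"
      obtain n where "f y < real n" using reals_Archimedean2 by blast
      then show "y \<in> (\<Union>n. Pset f R x (real n))" using y by (auto simp: Pset_def intro!: exI[of _ n])
    qed
    ultimately have "ball x R \<in> null_sets lborel"
      using null_sets_subset[of "(\<Union>n. Pset f R x (real n))" lborel "ball x R"] by simp
    then show False using ball_nonnull[OF R] by blast
  qed
  then obtain n2 where n2: "Pset f R x (real n2) \<notin> null_sets lborel" by blast
  have "- real n1 \<le> real n2" by simp
  from select[OF f this n1 n2] show ?thesis by blast
qed

lemma nonnull_open: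
  fixes x :: real
  assumes E: "E \<in> sets lborel" and nn: "ball x R \<inter> E \<notin> null_sets lborel"
  shows "\<exists>\<delta>>0. \<forall>x'. dist x' x < \<delta> \<longrightarrow> ball x' R \<inter> E \<notin> null_sets lborel"
proof -
  have "\<exists>n. ball x (R - inverse (real (Suc n))) \<inter> E \<notin> null_sets lborel"
  proof (rule ccontr)
    assume H: "\<not> ?thesis"
    have "(\<Union>n. ball x (R - inverse (real (Suc n))) \<inter> E) \<in> null_sets lborel"
      by (rule null_sets_UN) (use H in blast)
    moreover have "ball x R \<inter> E \<subseteq> (\<Union>n. ball x (R - inverse (real (Suc n))) \<inter> E)"
    proof
      fix y assume y: "y \<in> ball x R \<inter> E"
      then obtain n where "inverse (real (Suc n)) < R - dist x y"
        using reals_Archimedean[of "R - dist x y"] by auto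
      then have "y \<in> ball x (R - inverse (real (Suc n))) \<inter> E" using y by auto
      then show "y \<in> (\<Union>n. ball x (R - inverse (real (Suc n))) \<inter> E)" by blast
    qed
    moreover have "ball x R \<inter> E \<in> sets lborel" using E by simp
    ultimately have "ball x R \<inter> E \<in> null_sets lborel"
      using null_sets_subset by blast
    then show False using nn by blast
  qed
  then obtain n where n: "ball x (R - inverse (real (Suc n))) \<inter> E \<notin> null_sets lborel" by blast
  show ?thesis
  proof (intro exI[of _ "inverse (real (Suc n))"] conjI allI impI)
    show "0 < inverse (real (Suc n))" by simp
    fix x' assume d: "dist x' x < inverse (real (Suc n))"
    have sub: "ball x (R - inverse (real (Suc n))) \<inter> E \<subseteq> ball x' R \<inter> E"
    proof
      fix y assume y: "y \<in> ball x (R - inverse (real (Suc n))) \<inter> E"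
      have "dist x' y \<le> dist x' x + dist x y" by (rule dist_triangle)
      then show "y \<in> ball x' R \<inter> E" using y d by auto
    qed
    show "ball x' R \<inter> E \<notin> null_sets lborel"
    proof
      assume "ball x' R \<inter> E \<in> null_sets lborel"
      moreover have "ball x (R - inverse (real (Suc n))) \<inter> E \<in> sets lborel" using E by simp
      ultimately show False using null_sets_subset sub n by blast
    qed
  qed
qed

lemma good_open:
  assumes f[measurable]: "f \<in> borel_measurable borel" and g: "good f R x w"
  shows "\<exists>\<delta>>0. \<forall>x'. dist x' x < \<delta> \<longrightarrow> good f R x' w"
proof -
  have E1: "{y \<in> space borel. f y \<le> w} \<in> sets borel" by measurable
  have E2: "{y \<in> space borel. w \<le> f y} \<in> sets borel" by measurable
  have P: "Pset f R z w = ball z R \<inter> {y \<in> space borel. f y \<le> w}" for z by (auto simp: Pset_def)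
  have Q: "Qset f R z w = ball z R \<inter> {y \<in> space borel. w \<le> f y}" for z by (auto simp: Qset_def)
  obtain d1 where d1: "d1 > 0" "\<forall>x'. dist x' x < d1 \<longrightarrow> Pset f R x' w \<notin> null_sets lborel"
    using nonnull_open[of "{y \<in> space borel. f y \<le> w}" x R] E1 g unfolding P good_def by auto
  obtain d2 where d2: "d2 > 0" "\<forall>x'. dist x' x < d2 \<longrightarrow> Qset f R x' w \<notin> null_sets lborel"
    using nonnull_open[of "{y \<in> space borel. w \<le> f y}" x R] E2 g unfolding Q good_def by auto
  show ?thesis using d1 d2 by (intro exI[of _ "min d1 d2"]) (auto simp: good_def)
qed

lemma Phi_meas:
  assumes f: "(\<lambda>y. b y t) \<in> borel_measurable borel" and R: "R > 0"
  shows "(\<lambda>x. infdist q (K_R b R x t)) \<in> borel_measurable borel"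
  unfolding borel_measurable_iff_less
proof
  fix a
  have "open {x. infdist q (K_R b R x t) < a}"
    unfolding open_dist
  proof (intro ballI)
    fix x assume "x \<in> {x. infdist q (K_R b R x t) < a}"
    then have lt: "infdist q (K_R b R x t) < a" by simp
    obtain w0 where "good (\<lambda>y. b y t) R x w0" using good_exists[OF f R] by blast
    then have ne: "K_R b R x t \<noteq> {}" using good_in_K[where b=b and t=t, OF f] by blast
    obtain k where k: "k \<in> K_R b R x t" "dist q k < a"
      using lt ne unfolding infdist_notempty[OF ne]
      by (metis (no_types, lifting) bdd_below_image_dist cINF_less_iff)
    define r where "r = (a - dist q k) / 2"
    have r: "r > 0" "dist q k + 2 * r = a" using k(2) by (auto simp: r_def field_simps)
    obtain w' where w': "good (\<lambda>y. b y t) R x w'" "\<bar>k - w'\<bar> \<le> r"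
      using K_dense[where b=b and t=t, OF f k(1) r(1)] by auto
    have tri: "dist q w' \<le> dist q k + dist k w'" by (rule dist_triangle)
    have "dist k w' \<le> r" using w'(2) by (simp add: dist_real_def)
    then have dw: "dist q w' < a" using tri r by linarith
    obtain d where d: "d > 0" "\<forall>x'. dist x' x < d \<longrightarrow> good (\<lambda>y. b y t) R x' w'"
      using good_open[OF f w'(1)] by blast
    show "\<exists>e>0. \<forall>y. dist y x < e \<longrightarrow> y \<in> {x. infdist q (K_R b R x t) < a}"
    proof (intro exI[of _ d] conjI allI impI)
      fix y assume "dist y x < d"
      then have "w' \<in> K_R b R y t" using d good_in_K[where b=b and t=t, OF f] by blast
      then have "infdist q (K_R b R y t) \<le> dist q w'" by (rule infdist_le)
      then show "y \<in> {x. infdist q (K_R b R x t) < a}" using dw by simp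
    qed (use d in auto)
  qed
  then show "{w \<in> space borel. infdist q (K_R b R w t) < a} \<in> sets borel" by simp
qed

lemma g_meas:
  assumes f: "(\<lambda>y. b y t) \<in> borel_measurable borel" and R: "R > 0"
    and h[measurable]: "h \<in> borel_measurable borel"
  shows "(\<lambda>x. ereal (infdist (h x) (K_R b R x t))) \<in> borel_measurable borel"
proof -
  have eq: "ereal (infdist (h x) (K_R b R x t)) = (INF q\<in>\<rat>. ereal (infdist q (K_R b R x t) + dist (h x) q))" for x
  proof (rule antisym)
    show "ereal (infdist (h x) (K_R b R x t)) \<le> (INF q\<in>\<rat>. ereal (infdist q (K_R b R x t) + dist (h x) q))"
      by (intro INF_greatest) (simp add: infdist_triangle)
    show "(INF q\<in>\<rat>. ereal (infdist q (K_R b R x t) + dist (h x) q)) \<le> ereal (infdist (h x) (K_R b R x t))"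
    proof (rule ereal_le_epsilon2)
      fix e :: real assume e: "0 < e"
      obtain q where q: "q \<in> \<rat>" "h x - e/2 < q" "q < h x + e/2"
        using Rats_dense_in_real[of "h x - e/2" "h x + e/2"] e by auto
      have "infdist q (K_R b R x t) \<le> infdist (h x) (K_R b R x t) + dist q (h x)"
        by (rule infdist_triangle)
      then have "infdist q (K_R b R x t) + dist (h x) q \<le> infdist (h x) (K_R b R x t) + e"
        using q by (auto simp: dist_real_def)
      then have "(INF q\<in>\<rat>. ereal (infdist q (K_R b R x t) + dist (h x) q)) \<le> ereal (infdist (h x) (K_R b R x t) + e)"
        using q(1) by (meson INF_lower2 ereal_less_eq(3))
      then show "(INF q\<in>\<rat>. ereal (infdist q (K_R b R x t) + dist (h x) q)) \<le> ereal (infdist (h x) (K_R b R x t)) + ereal e"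
        by simp
    qed
  qed
  have [measurable]: "(\<lambda>x. infdist q (K_R b R x t)) \<in> borel_measurable borel" for q
    by (rule Phi_meas[where b=b and t=t, OF f R])
  have "(\<lambda>x. INF q\<in>\<rat>. ereal (infdist q (K_R b R x t) + dist (h x) q)) \<in> borel_measurable borel"
    by (intro borel_measurable_INF countable_rat) measurable
  then show ?thesis unfolding eq[symmetric] .
qed


lemma lip_ineq:
  assumes "lip_plus c \<le> ereal L" "y < x"
  shows "c x - c y \<le> L * (x - y)"
proof -
  have "ereal ((c (fst (x,y)) - c (snd (x,y))) / (fst (x,y) - snd (x,y))) \<le> lip_plus c"
    unfolding lip_plus_def by (rule SUP_upper) (use assms(2) in auto)
  then have "ereal ((c x - c y) / (x - y)) \<le> lip_plus c" by simp
  then have "ereal ((c x - c y) / (x - y)) \<le> ereal L" by (rule order_trans[OF _ assms(1)])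
  then have "(c x - c y) / (x - y) \<le> L" by simp
  then show ?thesis using assms(2) by (simp add: divide_le_eq mult.commute)
qed

lemma est_Q:
  fixes bkt :: "real \<Rightarrow> real"
  assumes lipx: "\<And>x y. y < x \<Longrightarrow> bkt x - bkt y \<le> Lt * (x - y)" and Lt: "Lt \<ge> 0"
    and I: "(\<integral>\<^sup>+ x. ennreal \<bar>bkt x - bt x\<bar> \<partial>lborel) \<le> ennreal \<epsilon>" and eps: "\<epsilon> \<ge> 0"
    and c: "c > 0" and h: "h > 0" "h \<le> R" "Lt * h \<le> c / 2" "\<epsilon> < c * h / 2"
  shows "Qset bt R x0 (bkt x0 - c) \<notin> null_sets lborel"
proof
  assume N: "Qset bt R x0 (bkt x0 - c) \<in> null_sets lborel"
  have ae: "AE y in lborel. y \<in> ball x0 R \<longrightarrow> bt y < bkt x0 - c"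
    by (rule AE_I'[OF N]) (auto simp: Qset_def)
  have "AE y in lborel. ennreal (c / 2) * indicator {x0 - h<..<x0} y \<le> ennreal \<bar>bkt y - bt y\<bar>"
    using ae
  proof eventually_elim
    case (elim y)
    show ?case
    proof (cases "y \<in> {x0 - h<..<x0}")
      case True
      then have yb: "y \<in> ball x0 R" using h by (auto simp: dist_real_def)
      have "bkt x0 - bkt y \<le> Lt * (x0 - y)" using lipx True by auto
      moreover have "Lt * (x0 - y) \<le> Lt * h" using True Lt by (intro mult_left_mono) auto
      ultimately have "c / 2 \<le> bkt y - bt y" using elim yb h(3) by auto
      then have "c / 2 \<le> \<bar>bkt y - bt y\<bar>" using abs_ge_self[of "bkt y - bt y"] by linarith
      then show ?thesis using True by auto
    qed simp
  qed
  then have "(\<integral>\<^sup>+ y. ennreal (c / 2) * indicator {x0 - h<..<x0} y \<partial>lborel) \<le> ennreal \<epsilon>"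
    by (rule order_trans[OF nn_integral_mono_AE I])
  moreover have "(\<integral>\<^sup>+ y. ennreal (c / 2) * indicator {x0 - h<..<x0} y \<partial>lborel) = ennreal (c / 2 * h)"
    using h c by (subst nn_integral_cmult_indicator) (auto simp: ennreal_mult''[symmetric] mult.commute)
  ultimately have "c / 2 * h \<le> \<epsilon>" using eps by simp
  then show False using h by simp
qed

lemma est_P:
  fixes bkt :: "real \<Rightarrow> real"
  assumes lipx: "\<And>x y. y < x \<Longrightarrow> bkt x - bkt y \<le> Lt * (x - y)" and Lt: "Lt \<ge> 0"
    and I: "(\<integral>\<^sup>+ x. ennreal \<bar>bkt x - bt x\<bar> \<partial>lborel) \<le> ennreal \<epsilon>" and eps: "\<epsilon> \<ge> 0"
    and c: "c > 0" and h: "h > 0" "h \<le> R" "Lt * h \<le> c / 2" "\<epsilon> < c * h / 2"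
  shows "Pset bt R x0 (bkt x0 + c) \<notin> null_sets lborel"
proof
  assume N: "Pset bt R x0 (bkt x0 + c) \<in> null_sets lborel"
  have ae: "AE y in lborel. y \<in> ball x0 R \<longrightarrow> bkt x0 + c < bt y"
    by (rule AE_I'[OF N]) (auto simp: Pset_def)
  have "AE y in lborel. ennreal (c / 2) * indicator {x0<..<x0 + h} y \<le> ennreal \<bar>bkt y - bt y\<bar>"
    using ae
  proof eventually_elim
    case (elim y)
    show ?case
    proof (cases "y \<in> {x0<..<x0 + h}")
      case True
      then have yb: "y \<in> ball x0 R" using h by (auto simp: dist_real_def)
      have "bkt y - bkt x0 \<le> Lt * (y - x0)" using lipx True by auto
      moreover have "Lt * (y - x0) \<le> Lt * h" using True Lt by (intro mult_left_mono) auto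
      ultimately have "c / 2 \<le> bt y - bkt y" using elim yb h(3) by auto
      then have "c / 2 \<le> \<bar>bkt y - bt y\<bar>" using abs_ge_minus_self[of "bkt y - bt y"] by linarith
      then show ?thesis using True by auto
    qed simp
  qed
  then have "(\<integral>\<^sup>+ y. ennreal (c / 2) * indicator {x0<..<x0 + h} y \<partial>lborel) \<le> ennreal \<epsilon>"
    by (rule order_trans[OF nn_integral_mono_AE I])
  moreover have "(\<integral>\<^sup>+ y. ennreal (c / 2) * indicator {x0<..<x0 + h} y \<partial>lborel) = ennreal (c / 2 * h)"
    using h c by (subst nn_integral_cmult_indicator) (auto simp: ennreal_mult''[symmetric] mult.commute)
  ultimately have "c / 2 * h \<le> \<epsilon>" using eps by simp
  then show False using h by simp
qed

lemma choose_h: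
  fixes \<epsilon> Lt R \<eta> :: real
  assumes eps: "\<epsilon> \<ge> 0" and Lt: "Lt \<ge> 0" and R: "R > 0" and eta: "\<eta> > 0"
  defines "c \<equiv> 2 * \<epsilon> / R + 2 * sqrt (\<epsilon> * Lt) + \<eta>"
  defines "h \<equiv> c * R / (c + 2 * Lt * R)"
  shows "c > 0" "h > 0" "h \<le> R" "Lt * h \<le> c / 2" "\<epsilon> < c * h / 2"
proof -
  define a where "a = 2 * \<epsilon> / R"
  define s where "s = 2 * sqrt (\<epsilon> * Lt)"
  have a0: "a \<ge> 0" using eps R by (simp add: a_def)
  have el: "\<epsilon> * Lt \<ge> 0" using eps Lt by (rule mult_nonneg_nonneg)
  have s0: "s \<ge> 0" using el by (simp add: s_def)
  have "s * s = 4 * (sqrt (\<epsilon> * Lt))\<^sup>2" by (simp add: s_def power2_eq_square algebra_simps)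
  then have ss: "s * s = 4 * \<epsilon> * Lt" using real_sqrt_pow2[OF el] by simp
  have cdef: "c = a + s + \<eta>" by (simp add: c_def a_def s_def)
  show c0: "c > 0" using a0 s0 eta cdef by simp
  have D: "c + 2 * Lt * R > 0" using c0 Lt R by (simp add: add_pos_nonneg)
  show "h > 0" unfolding h_def using c0 R D by simp
  show "h \<le> R" unfolding h_def using c0 R D Lt
    by (simp add: divide_le_eq mult.commute mult_left_mono)
  have "Lt * (c * R) \<le> c / 2 * (c + 2 * Lt * R)" using c0 by (simp add: algebra_simps)
  then show "Lt * h \<le> c / 2" unfolding h_def using D by (simp add: divide_le_eq mult.commute)
  have "c * (s + \<eta>) \<ge> (s + \<eta>) * (s + \<eta>)" using cdef a0 s0 eta by (intro mult_right_mono) auto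
  moreover have "(s + \<eta>) * (s + \<eta>) > s * s" using s0 eta by (simp add: algebra_simps add_pos_nonneg)
  ultimately have "c * (s + \<eta>) > s * s" by linarith
  then have "c * c > c * a + s * s" using cdef by (simp add: algebra_simps)
  then have "(c * a + s * s) * R < (c * c) * R" using R by (intro mult_strict_right_mono)
  then have "c * c * R > c * a * R + s * s * R" by (simp add: algebra_simps)
  then have k1: "c * c * R > c * a * R + (4 * \<epsilon> * Lt) * R" using ss by simp
  have k2: "c * a * R + (4 * \<epsilon> * Lt) * R = 2 * \<epsilon> * (c + 2 * Lt * R)"
    using R by (simp add: a_def field_simps)
  have key: "2 * \<epsilon> * (c + 2 * Lt * R) < c * c * R" using k1 k2 by linarith
  have e1: "c * h / 2 = c * c * R / (2 * (c + 2 * Lt * R))" unfolding h_def by (simp add: algebra_simps)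
  have "\<epsilon> * (2 * (c + 2 * Lt * R)) < c * c * R" using key by (simp add: mult_ac)
  then have e2: "\<epsilon> < c * c * R / (2 * (c + 2 * Lt * R))" using D by (subst pos_less_divide_eq) auto
  show "\<epsilon> < c * h / 2" unfolding e1 by (rule e2)
qed

lemma infdist_bound:
  assumes f: "(\<lambda>y. b y t) \<in> borel_measurable borel" and R: "R > 0" and Lt: "Lt \<ge> 0"
    and lipx: "\<And>x y. y < x \<Longrightarrow> bkt x - bkt y \<le> Lt * (x - y)"
    and I: "(\<integral>\<^sup>+ x. ennreal \<bar>bkt x - b x t\<bar> \<partial>lborel) \<le> ennreal \<epsilon>" and eps: "\<epsilon> \<ge> 0"
  shows "infdist (bkt x0) (K_R b R x0 t) \<le> 2 * \<epsilon> / R + 2 * sqrt (\<epsilon> * Lt)"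
proof (rule field_le_epsilon)
  fix \<eta> :: real assume eta: "\<eta> > 0"
  define c where "c = 2 * \<epsilon> / R + 2 * sqrt (\<epsilon> * Lt) + \<eta>"
  define h where "h = c * R / (c + 2 * Lt * R)"
  note ch = choose_h[OF eps Lt R eta, folded c_def, folded h_def]
  have Q: "Qset (\<lambda>y. b y t) R x0 (bkt x0 - c) \<notin> null_sets lborel"
    by (rule est_Q[OF lipx Lt I eps ch])
  have P: "Pset (\<lambda>y. b y t) R x0 (bkt x0 + c) \<notin> null_sets lborel"
    by (rule est_P[OF lipx Lt I eps ch])
  obtain w where w: "w \<in> {bkt x0 - c..bkt x0 + c}" "good (\<lambda>y. b y t) R x0 w"
    using select[OF f _ Q P] ch(1) by auto
  have "w \<in> K_R b R x0 t" by (rule good_in_K[where b=b and t=t, OF f w(2)])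
  then have "infdist (bkt x0) (K_R b R x0 t) \<le> dist (bkt x0) w" by (rule infdist_le)
  also have "\<dots> \<le> c" using w(1) by (auto simp: dist_real_def)
  finally show "infdist (bkt x0) (K_R b R x0 t) \<le> 2 * \<epsilon> / R + 2 * sqrt (\<epsilon> * Lt) + \<eta>"
    by (simp add: c_def)
qed

lemma dR_bound:
  assumes f: "(\<lambda>y. b y t) \<in> borel_measurable borel" and fk: "(\<lambda>y. bk y t) \<in> borel_measurable borel"
    and R: "R > 0" and Lt: "Lt \<ge> 0"
    and lip: "lip_plus (\<lambda>x. bk x t) \<le> ereal Lt"
    and I: "(\<integral>\<^sup>+ x. ennreal \<bar>bk x t - b x t\<bar> \<partial>lborel) \<le> ennreal \<epsilon>" and eps: "\<epsilon> \<ge> 0"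
  shows "d_R bk b R t \<le> ereal (2 * \<epsilon> / R + 2 * sqrt (\<epsilon> * Lt))"
  unfolding d_R_def
proof (rule esssup_I)
  show "(\<lambda>x. ereal (infdist (bk x t) (K_R b R x t))) \<in> borel_measurable lborel"
    using g_meas[where b=b and t=t, OF f R fk] by simp
  have lipx: "\<And>x y. y < x \<Longrightarrow> bk x t - bk y t \<le> Lt * (x - y)"
    using lip_ineq[OF lip] by blast
  show "AE x in lborel. ereal (infdist (bk x t) (K_R b R x t)) \<le> ereal (2 * \<epsilon> / R + 2 * sqrt (\<epsilon> * Lt))"
    using infdist_bound[where bkt="\<lambda>x. bk x t" and b=b and t=t, OF f R Lt lipx I eps] by simp
qed

lemma section_meas:
  fixes b :: "real \<Rightarrow> real \<Rightarrow> real"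
  assumes "set_integrable (lborel :: (real \<times> real) measure) (UNIV \<times> {0<..<T}) (\<lambda>p. b (fst p) (snd p))"
    and t: "t \<in> {0<..<T}"
  shows "(\<lambda>y. b y t) \<in> borel_measurable borel"
proof -
  have eqm: "borel_measurable (lborel :: (real \<times> real) measure) = borel_measurable borel"
    by (rule measurable_cong_sets) (rule sets_lborel, rule refl)
  have F0: "(\<lambda>p. indicator (UNIV \<times> {0<..<T}) p *\<^sub>R b (fst p) (snd p)) \<in> borel_measurable (lborel :: (real \<times> real) measure)"
    using assms(1) unfolding set_integrable_def by (rule borel_measurable_integrable)
  have F: "(\<lambda>p. indicator (UNIV \<times> {0<..<T}) p *\<^sub>R b (fst p) (snd p)) \<in> borel_measurable (borel :: (real \<times> real) measure)"
    using F0 unfolding eqm .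
  have c: "continuous_on UNIV (\<lambda>y::real. (y, t))"
    by (intro continuous_on_Pair continuous_on_id continuous_on_const)
  have P: "(\<lambda>y::real. (y, t)) \<in> measurable borel (borel :: (real \<times> real) measure)"
    by (rule borel_measurable_continuous_onI[OF c])
  have M: "(\<lambda>y. indicator (UNIV \<times> {0<..<T}) (y, t) *\<^sub>R b (fst (y, t)) (snd (y, t))) \<in> borel_measurable borel"
    using measurable_compose[OF P F] by simp
  have "(\<lambda>y. indicator (UNIV \<times> {0<..<T}) (y, t) *\<^sub>R b (fst (y, t)) (snd (y, t))) = (\<lambda>y. b y t)"
    using t by (auto simp: indicator_def)
  then show ?thesis using M by simp
qed

theorem lemma5p1:
  fixes T :: real
    and bk :: "nat \<Rightarrow> real \<Rightarrow> real \<Rightarrow> real"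
    and b :: "real \<Rightarrow> real \<Rightarrow> real"
    and L :: "real \<Rightarrow> real"
  assumes T_pos: "T > 0"
    and bk_L1: "\<And>k. set_integrable (lborel :: (real \<times> real) measure) (UNIV \<times> {0<..<T})
                        (\<lambda>p. bk k (fst p) (snd p))"
    and bk_Linf: "\<And>k. \<exists>C. AE p in (lborel :: (real \<times> real) measure).
                        p \<in> UNIV \<times> {0<..<T} \<longrightarrow> \<bar>bk k (fst p) (snd p)\<bar> \<le> C"
    and b_L1: "set_integrable (lborel :: (real \<times> real) measure) (UNIV \<times> {0<..<T})
                        (\<lambda>p. b (fst p) (snd p))"
    and b_Linf: "\<exists>C. AE p in (lborel :: (real \<times> real) measure).
                        p \<in> UNIV \<times> {0<..<T} \<longrightarrow> \<bar>b (fst p) (snd p)\<bar> \<le> C"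
    and L_meas: "set_borel_measurable lborel {0..T} L"
    and L_nonneg: "\<forall>t\<in>{0..T}. 0 \<le> L t"
    and L_half: "set_integrable lborel {0..T} (\<lambda>t. sqrt (L t))"
    and lip: "AE t in lborel. t \<in> {0<..<T} \<longrightarrow> (\<forall>k. lip_plus (\<lambda>x. bk k x t) \<le> ereal (L t))"
    and conv: "(\<lambda>k. esssup (restrict_space lborel {0<..<T})
                   (\<lambda>t. enn2ereal (\<integral>\<^sup>+ x. ennreal \<bar>bk k x t - b x t\<bar> \<partial>lborel)))
               \<longlonglongrightarrow> 0"
  shows "\<forall>R>0. (\<lambda>k. \<integral>\<^sup>+ t \<in> {0<..<T}. e2ennreal (d_R (bk k) b R t) \<partial>lborel) \<longlonglongrightarrow> 0"
proof (intro allI impI)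
  fix R :: real assume R: "R > 0"
  define I where "I k t = (\<integral>\<^sup>+ x. ennreal \<bar>bk k x t - b x t\<bar> \<partial>lborel)" for k t
  define E where "E k = esssup (restrict_space lborel {0<..<T}) (\<lambda>t. enn2ereal (I k t))" for k
  have E_eq: "E = (\<lambda>k. esssup (restrict_space lborel {0<..<T})
                   (\<lambda>t. enn2ereal (\<integral>\<^sup>+ x. ennreal \<bar>bk k x t - b x t\<bar> \<partial>lborel)))"
    by (intro ext) (simp add: E_def I_def)
  have E0: "E \<longlonglongrightarrow> 0" unfolding E_eq by (rule conv)
  have AEk: "AE t in lborel. t \<in> {0<..<T} \<longrightarrow> enn2ereal (I k t) \<le> E k" for k
  proof -
    have "AE t in restrict_space lborel {0<..<T}. enn2ereal (I k t) \<le> E k"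
      unfolding E_def by (rule esssup_AE)
    then show ?thesis by (subst (asm) AE_restrict_space_iff) auto
  qed
  have AE1: "AE t in lborel. \<forall>k. t \<in> {0<..<T} \<longrightarrow> enn2ereal (I k t) \<le> E k"
    unfolding AE_all_countable using AEk by blast
  define eps where "eps k = max 0 (real_of_ereal (E k))" for k
  have evfin: "eventually (\<lambda>k. -1 < E k \<and> E k < 1) sequentially"
  proof -
    have "eventually (\<lambda>k. -1 < E k) sequentially" by (rule order_tendstoD(1)[OF E0]) simp
    moreover have "eventually (\<lambda>k. E k < 1) sequentially" by (rule order_tendstoD(2)[OF E0]) simp
    ultimately show ?thesis by (rule eventually_conj)
  qed
  have Efin: "E k = ereal (real_of_ereal (E k))" if "-1 < E k \<and> E k < 1" for k
    using that by (cases "E k") auto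
  have "((\<lambda>k. ereal (real_of_ereal (E k))) \<longlongrightarrow> ereal 0) sequentially"
  proof -
    have "eventually (\<lambda>k. E k = ereal (real_of_ereal (E k))) sequentially"
      using evfin by eventually_elim (rule Efin)
    then show ?thesis using E0 tendsto_cong by (simp add: zero_ereal_def)
  qed
  then have "(\<lambda>k. real_of_ereal (E k)) \<longlonglongrightarrow> 0" by simp
  then have eps0: "eps \<longlonglongrightarrow> 0" unfolding eps_def using tendsto_max[OF tendsto_const, of _ 0 sequentially 0] by simp
  have eps_nn: "eps k \<ge> 0" for k by (simp add: eps_def)
  have bound_I: "eventually (\<lambda>k. \<forall>t. enn2ereal (I k t) \<le> E k \<longrightarrow> I k t \<le> ennreal (eps k)) sequentially"
    using evfin
  proof eventually_elim
    case (elim k)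
    have "E k \<le> ereal (eps k)" using Efin[OF elim] unfolding eps_def
      by (metis ereal_less_eq(3) max.cobounded2)
    then show ?case
    proof (intro allI impI)
      fix t assume "enn2ereal (I k t) \<le> E k"
      then have "enn2ereal (I k t) \<le> ereal (eps k)" using \<open>E k \<le> ereal (eps k)\<close> by (rule order_trans)
      then have "e2ennreal (enn2ereal (I k t)) \<le> e2ennreal (ereal (eps k))" by (rule e2ennreal_mono)
      then show "I k t \<le> ennreal (eps k)" by simp
    qed
  qed
  have Asets: "{0<..<T} \<in> sets lborel" by simp
  have hint: "integrable lborel (\<lambda>t. indicator {0<..<T} t * sqrt (L t))"
  proof -
    have "set_integrable lborel {0<..<T} (\<lambda>t. sqrt (L t))"
      by (rule set_integrable_subset[OF L_half Asets]) auto
    then show ?thesis unfolding set_integrable_def by simp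
  qed
  define H where "H = (\<integral> t. indicator {0<..<T} t * sqrt (L t) \<partial>lborel)"
  define g where "g k t = indicator {0<..<T} t * (2 * eps k / R + 2 * sqrt (eps k) * sqrt (L t))" for k t
  have g_eq: "g k = (\<lambda>t. (2 * eps k / R) * indicator {0<..<T} t + (2 * sqrt (eps k)) * (indicator {0<..<T} t * sqrt (L t)))" for k
    by (rule ext) (simp add: g_def algebra_simps)
  have ind_int: "integrable lborel (indicator {0<..<T} :: real \<Rightarrow> real)"
    using T_pos by (intro integrable_real_indicator) auto
  have gint: "integrable lborel (g k)" for k
    unfolding g_eq using ind_int hint by (intro Bochner_Integration.integrable_add Bochner_Integration.integrable_mult_right)
  have gnn: "0 \<le> g k t" for k t
  proof (cases "t \<in> {0<..<T}")
    case True
    then have "L t \<ge> 0" using L_nonneg by auto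
    then show ?thesis using True R eps_nn[of k] by (simp add: g_def)
  qed (simp add: g_def)
  have mA: "measure lborel {0<..<T} = T" using T_pos by (simp add: measure_def)
  have gval: "(\<integral>\<^sup>+ t. ennreal (g k t) \<partial>lborel) = ennreal (2 * eps k / R * T + 2 * sqrt (eps k) * H)" for k
  proof -
    have "(\<integral>\<^sup>+ t. ennreal (g k t) \<partial>lborel) = ennreal (integral\<^sup>L lborel (g k))"
      using gint gnn by (intro nn_integral_eq_integral) auto
    also have "integral\<^sup>L lborel (g k) = 2 * eps k / R * T + 2 * sqrt (eps k) * H"
      unfolding g_eq using ind_int hint mA by (simp add: H_def)
    finally show ?thesis .
  qed
  have main_bound: "eventually (\<lambda>k. (\<integral>\<^sup>+ t \<in> {0<..<T}. e2ennreal (d_R (bk k) b R t) \<partial>lborel)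
      \<le> (\<integral>\<^sup>+ t. ennreal (g k t) \<partial>lborel)) sequentially"
    using bound_I
  proof eventually_elim
    case (elim k)
    show ?case
    proof (rule nn_integral_mono_AE)
      show "AE t in lborel. e2ennreal (d_R (bk k) b R t) * indicator {0<..<T} t \<le> ennreal (g k t)"
        using AE1 lip
      proof eventually_elim
        case (elim t)
        show ?case
        proof (cases "t \<in> {0<..<T}")
          case False then show ?thesis by simp
        next
          case True
          have Lt: "L t \<ge> 0" using L_nonneg True by auto
          have fb: "(\<lambda>y. b y t) \<in> borel_measurable borel" by (rule section_meas[OF b_L1 True])
          have fk: "(\<lambda>y. bk k y t) \<in> borel_measurable borel" by (rule section_meas[OF bk_L1 True])
          have lk: "lip_plus (\<lambda>x. bk k x t) \<le> ereal (L t)" using elim(2) True by blast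
          have Ik: "I k t \<le> ennreal (eps k)" using \<open>\<forall>t. enn2ereal (I k t) \<le> E k \<longrightarrow> I k t \<le> ennreal (eps k)\<close> elim(1) True by blast
          have "d_R (bk k) b R t \<le> ereal (2 * eps k / R + 2 * sqrt (eps k * L t))"
            by (rule dR_bound[where b=b and bk="bk k" and t=t, OF fb fk R Lt lk Ik[unfolded I_def] eps_nn])
          then have "e2ennreal (d_R (bk k) b R t) \<le> ennreal (2 * eps k / R + 2 * sqrt (eps k * L t))"
            using e2ennreal_mono by fastforce
          then show ?thesis using True by (simp add: g_def real_sqrt_mult mult.assoc)
        qed
      qed
    qed
  qed
  have lim: "(\<lambda>k. ennreal (2 * eps k / R * T + 2 * sqrt (eps k) * H)) \<longlonglongrightarrow> 0"
  proof -
    have "(\<lambda>k. 2 * eps k / R * T + 2 * sqrt (eps k) * H) \<longlonglongrightarrow> 2 * 0 / R * T + 2 * sqrt 0 * H"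
      using R by (intro tendsto_intros eps0) auto
    then have "(\<lambda>k. ennreal (2 * eps k / R * T + 2 * sqrt (eps k) * H)) \<longlonglongrightarrow> ennreal 0"
      by (intro tendsto_ennrealI) simp
    then show ?thesis by simp
  qed
  show "(\<lambda>k. \<integral>\<^sup>+ t \<in> {0<..<T}. e2ennreal (d_R (bk k) b R t) \<partial>lborel) \<longlonglongrightarrow> 0"
  proof (rule tendsto_sandwich[OF _ _ tendsto_const lim])
    show "\<forall>\<^sub>F n in sequentially. 0 \<le> (\<integral>\<^sup>+ t \<in> {0<..<T}. e2ennreal (d_R (bk n) b R t) \<partial>lborel)" by simp
    show "\<forall>\<^sub>F n in sequentially. (\<integral>\<^sup>+ t \<in> {0<..<T}. e2ennreal (d_R (bk n) b R t) \<partial>lborel)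
        \<le> ennreal (2 * eps n / R * T + 2 * sqrt (eps n) * H)"
      using main_bound by (simp add: gval)
  qed
qed

end
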